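(* Let $d\ge2$ and $n\in\mathbb N_0$. Every $Z\in\mathcal V_n^d(\mathsf w_{-1,-1})$ satisfies $$\mathcal D_{-1}Z=-n(n+d-2)\,Z.$$ Moreover, $\mathcal V_n^d(\mathsf w_{-1,-1})=\mathcal H_n^{d,0}\oplus(1-t)\,\mathcal V_{n-1}^d(\mathsf w_{-1,1})$ (with the second summand $\{0\}$ when $n=0$).
   Context: Cone points $(x,t)=(t\xi,t)$, $\xi\in\mathbb S^{d-1}$. $\mathcal D_\gamma=t(1-t)\frac{\partial^2}{\partial t^2}+\big(d-1-(d+\gamma)t\big)\frac{\partial}{\partial t}+t^{-1}\Delta_0^{(\xi)}$, acting on functions of $(t,\xi)$, $t$-derivatives at fixed $\xi$, $\Delta_0^{(\xi)}$ the Laplace–Beltrami operator on $\mathbb S^{d-1}$. $\mathcal H_m^{d,0}$: homogeneous harmonic polynomials of degree $m$ on $\mathbb R^d$, with basis $\{Y_\ell^m\}$ orthonormal on $\mathbb S^{d-1}$ for normalized surface measure. Jacobi polynomials for real parameters: $P_n^{(\alpha,\beta)}(u)=\sum_{k=0}^n\frac{(\alpha+k+1)_{n-k}(-n)_k(n+\alpha+\beta+1)_k}{n!\,k!}(\frac{1-u}{2})^k$; $A_n^{(\alpha,\beta)}=2^n/(n+\alpha+\beta+1)_n$; $\widehat P_n^{(\alpha,\beta)}=A_n^{(\alpha,\beta)}P_n^{(\alpha,\beta)}$. $J_n^{(\alpha,-1)}(u)=1$ for $n=0$ and $J_n^{(\alpha,-1)}(u)=\int_{-1}^u\widehat P_{n-1}^{(\alpha+1,0)}(w)\mathrm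 dw$ for $n\ge1$. $\mathcal V_n^d(\mathsf w_{-1,-1})$ is the span of $\{J_{n-m}^{(2m+d-2,-1)}(1-2t)Y_\ell^m(x):0\le m\le n,\ \ell\}$ (the Sobolev orthogonal polynomials of degree $n$ for $\beta=-1$, $s=1$), and $\mathcal V_k^d(\mathsf w_{-1,1})$ is the span of $\{P_{k-m}^{(2m+d-2,1)}(1-2t)Y_\ell^m(x):0\le m\le k,\ \ell\}$ (the orthogonal polynomials of degree $k$ on the cone for the weight $t^{-1}(1-t)$); all as functions on the cone. *)

theory Defs
  imports "HOL-Analysis.Analysis"
begin

definition jacobiP :: "nat \<Rightarrow> real \<Rightarrow> real \<Rightarrow> real \<Rightarrow> real" where
  "jacobiP n a b u =
     (\<Sum>k\<le>n. pochhammer (a + real k + 1) (n - k) * pochhammer (- real n) k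
              * pochhammer (real n + a + b + 1) k / (fact n * fact k) * ((1 - u) / 2) ^ k)"

definition jacobiA :: "nat \<Rightarrow> real \<Rightarrow> real \<Rightarrow> real" where
  "jacobiA n a b = 2 ^ n / pochhammer (real n + a + b + 1) n"

definition jacobiPhat :: "nat \<Rightarrow> real \<Rightarrow> real \<Rightarrow> real \<Rightarrow> real" where
  "jacobiPhat n a b u = jacobiA n a b * jacobiP n a b u"

definition jacobiJ :: "nat \<Rightarrow> real \<Rightarrow> real \<Rightarrow> real" where
  "jacobiJ n a u = (if n = 0 then 1 else integral {-1..u} (\<lambda>w. jacobiPhat (n - 1) (a + 1) 0 w))"

definition pdiff :: "'n::finite \<Rightarrow> (real^'n \<Rightarrow> real) \<Rightarrow> real^'n \<Rightarrow> real" where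
  "pdiff i f x = deriv (\<lambda>s. f (x + s *\<^sub>R axis i 1)) 0"

definition laplacian :: "(real^'n::finite \<Rightarrow> real) \<Rightarrow> real^'n \<Rightarrow> real" where
  "laplacian f x = (\<Sum>i\<in>UNIV. pdiff i (pdiff i f) x)"

text \<open>$\mathcal H_m^{d,0}$: homogeneous harmonic polynomials of degree $m$ on $\mathbb R^d$, $d = CARD('n)$.\<close>
definition harm :: "nat \<Rightarrow> (real^'n::finite \<Rightarrow> real) set" where
  "harm m = {Y. polynomial_function Y \<and> (\<forall>c x. Y (c *\<^sub>R x) = c ^ m * Y x)
                \<and> (\<forall>x. laplacian Y x = 0)}"

text \<open>Laplace--Beltrami operator on the sphere: the Euclidean Laplacian of the
  degree-0 homogeneous extension, evaluated at the point of the sphere.\<close>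
definition laplace_beltrami :: "(real^'n::finite \<Rightarrow> real) \<Rightarrow> real^'n \<Rightarrow> real" where
  "laplace_beltrami g \<xi> = laplacian (\<lambda>x. g (x /\<^sub>R norm x)) \<xi>"

definition Dcone :: "real \<Rightarrow> (real \<Rightarrow> real^'n::finite \<Rightarrow> real) \<Rightarrow> real \<Rightarrow> real^'n \<Rightarrow> real" where
  "Dcone \<gamma> F t \<xi> =
     t * (1 - t) * deriv (\<lambda>s. deriv (\<lambda>r. F r \<xi>) s) t
     + (real CARD('n) - 1 - (real CARD('n) + \<gamma>) * t) * deriv (\<lambda>r. F r \<xi>) t
     + laplace_beltrami (F t) \<xi> / t"

definition fspan :: "('a \<Rightarrow> 'b \<Rightarrow> real) set \<Rightarrow> ('a \<Rightarrow> 'b \<Rightarrow> real) set" where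
  "fspan G = {F. \<exists>S c. finite S \<and> S \<subseteq> G \<and> F = (\<lambda>t \<xi>. \<Sum>g\<in>S. c g * g t \<xi>)}"

text \<open>$\mathcal V_n^d(\mathsf w_{-1,-1})$, functions of $(t,\xi)$, point $(t\xi,t)$.\<close>
definition Vsob :: "nat \<Rightarrow> (real \<Rightarrow> real^'n::finite \<Rightarrow> real) set" where
  "Vsob n = fspan {(\<lambda>t \<xi>. jacobiJ (n - m) (real (2 * m) + real CARD('n) - 2) (1 - 2 * t)
                          * Y (t *\<^sub>R \<xi>)) | m Y. m \<le> n \<and> Y \<in> harm m}"

definition Vop :: "nat \<Rightarrow> (real \<Rightarrow> real^'n::finite \<Rightarrow> real) set" where
  "Vop k = fspan {(\<lambda>t \<xi>. jacobiP (k - m) (real (2 * m) + real CARD('n) - 2) 1 (1 - 2 * t)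
                          * Y (t *\<^sub>R \<xi>)) | m Y. m \<le> k \<and> Y \<in> harm m}"

definition cone_restrict :: "(real \<Rightarrow> real^'n::finite \<Rightarrow> real) \<Rightarrow> real \<Rightarrow> real^'n \<Rightarrow> real" where
  "cone_restrict F = (\<lambda>t \<xi>. if 0 \<le> t \<and> t \<le> 1 \<and> norm \<xi> = 1 then F t \<xi> else 0)"

end

theory Submission
  imports Defs "HOL-Computational_Algebra.Polynomial"
begin

definition jc :: "nat \<Rightarrow> real \<Rightarrow> real \<Rightarrow> nat \<Rightarrow> real" where
  "jc k a b j = pochhammer (a + real j + 1) (k - j) * pochhammer (- real k) j
              * pochhammer (real k + a + b + 1) j / (fact k * fact j)"

definition jp :: "nat \<Rightarrow> real \<Rightarrow> real \<Rightarrow> real poly" where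
  "jp k a b = (\<Sum>j\<le>k. monom (jc k a b j) j)"

lemma jc_zero: "k < j \<Longrightarrow> jc k a b j = 0"
  unfolding jc_def by (auto simp: pochhammer_eq_0_iff)

lemma coeff_jp: "coeff (jp k a b) j = jc k a b j"
  unfolding jp_def by (auto simp: coeff_sum coeff_monom jc_zero)

lemma poly_jp: "poly (jp k a b) t = jacobiP k a b (1 - 2 * t)"
  unfolding jp_def jacobiP_def jc_def by (simp add: poly_sum poly_monom mult.commute)

lemma jc_rec:
  "real (Suc i) * (real i + a + 1) * jc k a b (Suc i)
     = (real i * (real i + a + b + 1) - real k * (real k + a + b + 1)) * jc k a b i"
proof (cases "i < k")
  case True
  then obtain r where r: "k - i = Suc r" and r2: "k - Suc i = r"
    by (metis Suc_diff_Suc)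
  define P where "P = pochhammer (a + real i + 2) r"
  define Q where "Q = pochhammer (- real k) i"
  define R where "R = pochhammer (real k + a + b + 1) i"
  have e1: "jc k a b (Suc i) = P * (Q * (real i - real k)) * (R * (real k + a + b + 1 + real i)) / (fact k * (real (Suc i) * fact i))"
    unfolding jc_def r2 P_def Q_def R_def pochhammer_rec'[of "- real k" i]
      pochhammer_rec'[of "real k + a + b + 1" i] fact_Suc
    by (simp add: algebra_simps)
  have e2: "jc k a b i = (a + real i + 1) * P * Q * R / (fact k * fact i)"
    unfolding jc_def r P_def Q_def R_def pochhammer_rec[of "a + real i + 1" r]
    by (simp add: algebra_simps)
  have h: "real i * (real i + a + b + 1) - real k * (real k + a + b + 1) = (real i - real k) * (real k + a + b + 1 + real i)"
    by (simp add: algebra_simps)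
  have fk: "fact k * fact i \<noteq> (0::real)" by simp
  show ?thesis
    unfolding e1 e2 h fact_Suc using fk by (simp add: field_simps del: of_nat_Suc)
next
  case False
  then show ?thesis
    by (cases "i = k") (auto simp: jc_zero)
qed

lemma jc_DC:
  "real (Suc i) * (jc N a 1 i - jc N a 1 (Suc i)) = real (Suc N) * jc N (a + 1) 0 i"
proof (cases "i < N")
  case True
  then obtain r where r: "N - i = Suc r" and r2: "N - Suc i = r"
    by (metis Suc_diff_Suc)
  have rr: "real r = real N - real i - 1" using True r2 by linarith
  define P where "P = pochhammer (a + real i + 2) r"
  define Q where "Q = pochhammer (- real N) i"
  define R where "R = pochhammer (real N + a + 2) i"
  have e1: "jc N a 1 (Suc i) = P * (Q * (real i - real N)) * (R * (real N + a + 2 + real i)) / (fact N * fact i) / real (Suc i)"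
    unfolding jc_def r2 P_def Q_def R_def pochhammer_rec'[of "- real N" i]
      pochhammer_rec'[of "real N + a + 1 + 1" i] fact_Suc
    by (simp add: algebra_simps)
  have e2: "jc N a 1 i = (a + real i + 1) * P * Q * R / (fact N * fact i)"
    unfolding jc_def r P_def Q_def R_def pochhammer_rec[of "a + real i + 1" r]
    by (simp add: algebra_simps)
  have e3: "jc N (a + 1) 0 i = (a + real N + 1) * P * Q * R / (fact N * fact i)"
    unfolding jc_def r P_def Q_def R_def pochhammer_rec'[of "a + 1 + real i + 1" r] rr
    by (simp add: algebra_simps)
  define G where "G = P * Q * R / (fact N * fact i)"
  have f1: "jc N a 1 (Suc i) = G * (real i - real N) * (real N + a + 2 + real i) / (real i + 1)"
    unfolding e1 G_def by (simp add: ac_simps)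
  have f2: "jc N a 1 i = (a + real i + 1) * G" unfolding e2 G_def by simp
  have f3: "jc N (a + 1) 0 i = (a + real N + 1) * G" unfolding e3 G_def by simp
  have ne: "real i + 1 \<noteq> 0" by linarith
  show ?thesis
    unfolding f1 f2 f3 using ne by (simp add: field_simps)
next
  case False
  have z: "jc N a 1 (Suc i) = 0" by (rule jc_zero) (use False in linarith)
  show ?thesis
  proof (cases "i = N")
    case True
    then show ?thesis unfolding z by (simp add: jc_def algebra_simps)
  next
    case False
    then have "N < i" using \<open>\<not> i < N\<close> by linarith
    then show ?thesis unfolding z by (simp add: jc_zero)
  qed
qed

lemma jp_ode_poly:
  "pCons 0 (pderiv (pderiv (jp k a b)) - pCons 0 (pderiv (pderiv (jp k a b))))
   + smult (a + 1) (pderiv (jp k a b)) - smult (a + b + 2) (pCons 0 (pderiv (jp k a b)))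
   + smult (real k * (real k + a + b + 1)) (jp k a b) = 0" (is "?L = 0")
proof (rule poly_eqI)
  fix n
  show "coeff ?L n = coeff 0 n"
  proof (cases n)
    case 0
    then show ?thesis using jc_rec[of 0 a k b] by (simp add: coeff_pderiv coeff_jp algebra_simps)
  next
    case (Suc m)
    note S = Suc
    show ?thesis
    proof (cases m)
      case 0
      then show ?thesis using S jc_rec[of 1 a k b] by (simp add: coeff_pderiv coeff_jp algebra_simps)
    next
      case (Suc j)
      then show ?thesis using S jc_rec[of "Suc (Suc j)" a k b] by (simp add: coeff_pderiv coeff_jp algebra_simps)
    qed
  qed
qed

lemma jp_ode:
  "t * (1 - t) * poly (pderiv (pderiv (jp k a b))) t + (a + 1 - (a + b + 2) * t) * poly (pderiv (jp k a b)) t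
   + real k * (real k + a + b + 1) * poly (jp k a b) t = 0"
proof -
  have "poly (pCons 0 (pderiv (pderiv (jp k a b)) - pCons 0 (pderiv (pderiv (jp k a b))))
   + smult (a + 1) (pderiv (jp k a b)) - smult (a + b + 2) (pCons 0 (pderiv (jp k a b)))
   + smult (real k * (real k + a + b + 1)) (jp k a b)) t = 0"
    using jp_ode_poly by simp
  then show ?thesis by (simp add: algebra_simps)
qed

lemma DC_poly: "pderiv (jp N a 1 - pCons 0 (jp N a 1)) = smult (- real (Suc N)) (jp N (a + 1) 0)"
proof (rule poly_eqI)
  fix n
  show "coeff (pderiv (jp N a 1 - pCons 0 (jp N a 1))) n = coeff (smult (- real (Suc N)) (jp N (a + 1) 0)) n"
    using jc_DC[of n N a] by (simp add: coeff_pderiv coeff_jp algebra_simps)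
qed

definition Rp :: "nat \<Rightarrow> real \<Rightarrow> real poly" where
  "Rp k a = (if k = 0 then 1 else smult (2 * jacobiA (k - 1) (a + 1) 0 / real k) (jp (k - 1) a 1 - pCons 0 (jp (k - 1) a 1)))"

lemma Rp_deriv: "0 < k \<Longrightarrow> pderiv (Rp k a) = smult (- 2 * jacobiA (k - 1) (a + 1) 0) (jp (k - 1) (a + 1) 0)"
proof -
  assume k: "0 < k"
  then obtain N where N: "k = Suc N" by (cases k) auto
  show ?thesis unfolding Rp_def N using DC_poly[of N a]
    by (simp add: pderiv_smult del: of_nat_Suc)
qed

lemma Rp_one: "0 < k \<Longrightarrow> poly (Rp k a) 1 = 0"
  unfolding Rp_def by simp

lemma Rp_poly: "0 < k \<Longrightarrow> poly (Rp k a) t = 2 * jacobiA (k - 1) (a + 1) 0 / real k * (1 - t) * jacobiP (k - 1) a 1 (1 - 2 * t)"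
  unfolding Rp_def by (simp add: poly_jp field_simps)

lemma J_eq:
  assumes t: "t \<le> 1"
  shows "jacobiJ k a (1 - 2 * t) = poly (Rp k a) t"
proof (cases "k = 0")
  case True
  then show ?thesis by (simp add: jacobiJ_def Rp_def)
next
  case False
  then have k: "0 < k" by simp
  define A where "A = jacobiA (k - 1) (a + 1) 0"
  define F where "F = (\<lambda>w. poly (Rp k a) ((1 - w) / 2))"
  have der: "(F has_vector_derivative jacobiPhat (k - 1) (a + 1) 0 w) (at w within {-1..1 - 2 * t})" for w
  proof -
    have "((\<lambda>w. poly (Rp k a) ((1 - w) / 2)) has_real_derivative
            poly (pderiv (Rp k a)) ((1 - w) / 2) * (- 1 / 2)) (at w)"
      by (rule DERIV_chain2[OF poly_DERIV]) (auto intro!: derivative_eq_intros)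
    also have "poly (pderiv (Rp k a)) ((1 - w) / 2) * (- 1 / 2) = jacobiPhat (k - 1) (a + 1) 0 w"
      unfolding Rp_deriv[OF k] jacobiPhat_def by (simp add: poly_jp field_simps)
    finally show ?thesis unfolding F_def
      using has_real_derivative_iff_has_vector_derivative has_vector_derivative_at_within by blast
  qed
  have "((\<lambda>w. jacobiPhat (k - 1) (a + 1) 0 w) has_integral F (1 - 2 * t) - F (- 1)) {-1..1 - 2 * t}"
    by (rule fundamental_theorem_of_calculus) (use t der in auto)
  then have "integral {-1..1 - 2 * t} (\<lambda>w. jacobiPhat (k - 1) (a + 1) 0 w) = poly (Rp k a) t"
    using Rp_one[OF k, of a] unfolding F_def by (simp add: integral_unique)
  then show ?thesis using k by (simp add: jacobiJ_def)
qed

lemma poly_der [derivative_intros]: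
  "((\<lambda>x. poly p x) has_real_derivative poly (pderiv p) x) (at x within S)"
  using poly_DERIV has_field_derivative_at_within by blast

lemma Rp_ode:
  "t * (1 - t) * poly (pderiv (pderiv (Rp k a))) t + (a + 1) * (1 - t) * poly (pderiv (Rp k a)) t
   + real k * (real k + a) * poly (Rp k a) t = 0"
proof (cases "k = 0")
  case True
  then show ?thesis by (simp add: Rp_def)
next
  case False
  then have k: "0 < k" by simp
  define A where "A = jacobiA (k - 1) (a + 1) 0"
  define C where "C = jp (k - 1) (a + 1) 0"
  define R where "R = Rp k a"
  define G where "G = (\<lambda>t. - 2 * A * (t * (1 - t) * poly (pderiv C) t + (a + 1) * (1 - t) * poly C t)
                        + real k * (real k + a) * poly R t)"
  have GE: "t * (1 - t) * poly (pderiv (pderiv (Rp k a))) t + (a + 1) * (1 - t) * poly (pderiv (Rp k a)) t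
   + real k * (real k + a) * poly (Rp k a) t = G t" for t
    unfolding G_def R_def Rp_deriv[OF k] A_def C_def by (simp add: pderiv_smult pderiv_minus algebra_simps)
  have dG: "(G has_real_derivative 0) (at t)" for t
  proof -
    have "(G has_real_derivative
       - 2 * A * ((1 - 2 * t) * poly (pderiv C) t + t * (1 - t) * poly (pderiv (pderiv C)) t
          - (a + 1) * poly C t + (a + 1) * (1 - t) * poly (pderiv C) t)
       + real k * (real k + a) * poly (pderiv R) t) (at t)"
      unfolding G_def by (auto intro!: derivative_eq_intros simp: algebra_simps)
    moreover have "- 2 * A * ((1 - 2 * t) * poly (pderiv C) t + t * (1 - t) * poly (pderiv (pderiv C)) t
          - (a + 1) * poly C t + (a + 1) * (1 - t) * poly (pderiv C) t)
       + real k * (real k + a) * poly (pderiv R) t = 0"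
    proof -
      have o: "t * (1 - t) * poly (pderiv (pderiv C)) t + (a + 1 + 1 - (a + 1 + 0 + 2) * t) * poly (pderiv C) t
        + real (k - 1) * (real (k - 1) + (a + 1) + 0 + 1) * poly C t = 0"
        unfolding C_def by (rule jp_ode)
      have kk: "real (k - 1) = real k - 1" using k by simp
      have pR: "poly (pderiv R) t = - 2 * A * poly C t"
        unfolding R_def Rp_deriv[OF k] A_def C_def by simp
      show ?thesis unfolding pR using o unfolding kk by algebra
    qed
    ultimately show ?thesis by simp
  qed
  have "G t = G 1" using dG DERIV_isconst_all by blast
  also have "G 1 = 0" unfolding G_def R_def using Rp_one[OF k] by simp
  finally show ?thesis using GE by simp
qed

definition tF :: "real poly \<Rightarrow> nat \<Rightarrow> real \<Rightarrow> real \<Rightarrow> real" where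
  "tF R m c r = poly R r * r ^ m * c"
definition tF1 :: "real poly \<Rightarrow> nat \<Rightarrow> real \<Rightarrow> real \<Rightarrow> real" where
  "tF1 R m c r = (poly (pderiv R) r * r ^ m + poly R r * (real m * r ^ (m - 1))) * c"
definition tF2 :: "real poly \<Rightarrow> nat \<Rightarrow> real \<Rightarrow> real \<Rightarrow> real" where
  "tF2 R m c r = (poly (pderiv (pderiv R)) r * r ^ m + 2 * poly (pderiv R) r * (real m * r ^ (m - 1))
                 + poly R r * (real m * (real m - 1) * r ^ (m - 2))) * c"

lemma tF_deriv: "(tF R m c has_real_derivative tF1 R m c r) (at r)"
  unfolding tF_def tF1_def
  by (auto intro!: derivative_eq_intros simp: algebra_simps)

lemma tF1_deriv: "(tF1 R m c has_real_derivative tF2 R m c r) (at r)"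
proof -
  have "(tF1 R m c has_real_derivative
     (poly (pderiv (pderiv R)) r * r ^ m + poly (pderiv R) r * (real m * r ^ (m - 1))
      + (poly (pderiv R) r * (real m * r ^ (m - 1)) + poly R r * (real m * (real (m - 1) * r ^ (m - 1 - 1))))) * c) (at r)"
    unfolding tF1_def
    by (auto intro!: derivative_eq_intros simp: algebra_simps)
  moreover have "(poly (pderiv (pderiv R)) r * r ^ m + poly (pderiv R) r * (real m * r ^ (m - 1))
      + (poly (pderiv R) r * (real m * r ^ (m - 1)) + poly R r * (real m * (real (m - 1) * r ^ (m - 1 - 1))))) * c
     = tF2 R m c r"
    unfolding tF2_def by (cases m) (auto simp: algebra_simps)
  ultimately show ?thesis by simp
qed

lemma time_ode:
  fixes d t c :: real
  assumes t: "0 < t" and mn: "m \<le> n"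
  shows "t * (1 - t) * tF2 (Rp (n - m) (real (2 * m) + d - 2)) m c t
     + (d - 1 - (d + -1) * t) * tF1 (Rp (n - m) (real (2 * m) + d - 2)) m c t
     + (- (real m * (real m + d - 2)) * tF (Rp (n - m) (real (2 * m) + d - 2)) m c t) / t
     = - (real n * (real n + d - 2)) * tF (Rp (n - m) (real (2 * m) + d - 2)) m c t"
proof -
  define a where "a = real (2 * m) + d - 2"
  define R where "R = Rp (n - m) a"
  have o: "t * (1 - t) * poly (pderiv (pderiv R)) t + (a + 1) * (1 - t) * poly (pderiv R) t
   + real (n - m) * (real (n - m) + a) * poly R t = 0"
    unfolding R_def by (rule Rp_ode)
  have nm: "real (n - m) = real n - real m" using mn by simp
  have tn: "t \<noteq> 0" using t by simp
  have o2: "t * (1 - t) * poly (pderiv (pderiv R)) t + (real (2 * m) + d - 2 + 1) * (1 - t) * poly (pderiv R) t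
   + (real n - real m) * ((real n - real m) + (real (2 * m) + d - 2)) * poly R t = 0"
    using o unfolding nm a_def .
  show ?thesis
    unfolding a_def[symmetric] R_def[symmetric] tF_def tF1_def tF2_def
  proof (cases m)
    case 0
    show "t * (1 - t) * ((poly (pderiv (pderiv R)) t * t ^ m + 2 * poly (pderiv R) t * (real m * t ^ (m - 1)) +
       poly R t * (real m * (real m - 1) * t ^ (m - 2))) * c) +
     (d - 1 - (d + - 1) * t) * ((poly (pderiv R) t * t ^ m + poly R t * (real m * t ^ (m - 1))) * c) +
     - (real m * (real m + d - 2)) * (poly R t * t ^ m * c) / t =
     - (real n * (real n + d - 2)) * (poly R t * t ^ m * c)"
      using o2 unfolding 0 by simp algebra
  next
    case (Suc j)
    note mS = Suc
    show "t * (1 - t) * ((poly (pderiv (pderiv R)) t * t ^ m + 2 * poly (pderiv R) t * (real m * t ^ (m - 1)) +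
       poly R t * (real m * (real m - 1) * t ^ (m - 2))) * c) +
     (d - 1 - (d + - 1) * t) * ((poly (pderiv R) t * t ^ m + poly R t * (real m * t ^ (m - 1))) * c) +
     - (real m * (real m + d - 2)) * (poly R t * t ^ m * c) / t =
     - (real n * (real n + d - 2)) * (poly R t * t ^ m * c)"
    proof (cases j)
      case 0
      show ?thesis using o2 tn unfolding mS 0 by (simp add: field_simps) algebra
    next
      case (Suc i)
      obtain T where T: "T = t ^ i" by simp
      have p1: "t ^ m = t * t * T" "t ^ (m - 1) = t * T" "t ^ (m - 2) = T"
        unfolding T mS Suc by auto
      have rm: "real m = real i + 2" unfolding mS Suc by simp
      show ?thesis unfolding p1 rm using o2 tn unfolding mS Suc by (simp add: field_simps) algebra
    qed
  qed
qed

lemma deriv_shift0: "deriv (\<lambda>r. g (s + r)) 0 = deriv g s"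
proof -
  have e: "(\<lambda>r. g (s + r)) = (\<lambda>r. g (r + s))" by (simp add: add.commute)
  have "(\<lambda>D. ((\<lambda>r. g (r + s)) has_field_derivative D) (at 0)) = (\<lambda>D. (g has_field_derivative D) (at s))"
    using DERIV_shift[of g _ 0 s] by simp
  then show ?thesis unfolding e by (simp add: deriv_def)
qed

lemma lap_reduce:
  "laplacian f x = (\<Sum>i\<in>UNIV. deriv (\<lambda>s. deriv (\<lambda>r. f (x + r *\<^sub>R axis i 1)) s) 0)"
proof -
  have "deriv (\<lambda>r. f (x + s *\<^sub>R axis i 1 + r *\<^sub>R axis i 1)) 0 = deriv (\<lambda>r. f (x + r *\<^sub>R axis i 1)) s" for s i
  proof -
    have "deriv (\<lambda>r. f (x + s *\<^sub>R axis i 1 + r *\<^sub>R axis i 1)) 0 = deriv (\<lambda>r. (\<lambda>r. f (x + r *\<^sub>R axis i 1)) (s + r)) 0"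
      by (simp add: scaleR_add_left add.assoc)
    then show ?thesis using deriv_shift0[of "\<lambda>r. f (x + r *\<^sub>R axis i 1)" s] by simp
  qed
  then show ?thesis unfolding laplacian_def pdiff_def by simp
qed

lemma deriv2_one:
  assumes "open U" "t \<in> U"
    "\<And>r. r \<in> U \<Longrightarrow> (f has_real_derivative fa r) (at r)"
    "(fa has_real_derivative v) (at t)"
  shows "deriv (\<lambda>s. deriv f s) t = v"
proof -
  have "((\<lambda>s. deriv f s) has_real_derivative v) (at t)"
    by (rule has_field_derivative_transform_within_open[OF assms(4,1,2)])
       (use assms(3) DERIV_imp_deriv in metis)
  then show ?thesis by (rule DERIV_imp_deriv)
qed

lemma deriv2_sum:
  assumes "finite S" "open U" "t \<in> U"
    "\<And>g r. g \<in> S \<Longrightarrow> r \<in> U \<Longrightarrow> (f g has_real_derivative fa g r) (at r)"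
    "\<And>g. g \<in> S \<Longrightarrow> (fa g has_real_derivative fb g) (at t)"
  shows "deriv (\<lambda>s. deriv (\<lambda>r. \<Sum>g\<in>S. c g * f g r) s) t = (\<Sum>g\<in>S. c g * fb g)"
proof (rule deriv2_one[OF assms(2,3)])
  fix r assume "r \<in> U"
  then show "((\<lambda>r. \<Sum>g\<in>S. c g * f g r) has_real_derivative (\<Sum>g\<in>S. c g * fa g r)) (at r)"
    using assms(4) by (auto intro!: DERIV_sum DERIV_cmult)
next
  show "((\<lambda>r. \<Sum>g\<in>S. c g * fa g r) has_real_derivative (\<Sum>g\<in>S. c g * fb g)) (at t)"
    using assms(5) by (auto intro!: DERIV_sum DERIV_cmult)
qed

lemma line_poly:
  assumes "polynomial_function (Y :: 'a::real_normed_vector \<Rightarrow> real)"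
  shows "real_polynomial_function (\<lambda>r::real. Y (x + r *\<^sub>R v))"
proof -
  have "polynomial_function (\<lambda>r::real. x + r *\<^sub>R v)"
    by (intro polynomial_function_add polynomial_function_mult) auto
  from polynomial_function_compose[OF this assms] show ?thesis
    by (simp add: real_polynomial_function_eq o_def)
qed

lemma line_derivs:
  assumes "polynomial_function (Y :: 'a::real_normed_vector \<Rightarrow> real)"
  shows "\<exists>p. \<forall>r. ((\<lambda>r. Y (x + r *\<^sub>R v)) has_real_derivative fst p r) (at r)
                \<and> (fst p has_real_derivative snd p r) (at r)"
proof -
  obtain q1 where q1: "real_polynomial_function q1" "\<And>r. ((\<lambda>r. Y (x + r *\<^sub>R v)) has_real_derivative q1 r) (at r)"
    using has_real_derivative_polynomial_function[OF line_poly[OF assms]] by blast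
  obtain q2 where q2: "\<And>r. (q1 has_real_derivative q2 r) (at r)"
    using has_real_derivative_polynomial_function[OF q1(1)] by blast
  show ?thesis by (rule exI[of _ "(q1, q2)"]) (use q1 q2 in auto)
qed

lemma laplacian_sum:
  fixes Y :: "'g \<Rightarrow> real^'n::finite \<Rightarrow> real"
  assumes S: "finite S" and P: "\<And>g. g \<in> S \<Longrightarrow> polynomial_function (Y g)"
  shows "laplacian (\<lambda>x. \<Sum>g\<in>S. c g * Y g x) x = (\<Sum>g\<in>S. c g * laplacian (Y g) x)"
proof -
  have "deriv (\<lambda>s. deriv (\<lambda>r. \<Sum>g\<in>S. c g * Y g (x + r *\<^sub>R axis i 1)) s) 0
        = (\<Sum>g\<in>S. c g * deriv (\<lambda>s. deriv (\<lambda>r. Y g (x + r *\<^sub>R axis i 1)) s) 0)" for i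
  proof -
    have "\<forall>g\<in>S. \<exists>p. \<forall>r. ((\<lambda>r. Y g (x + r *\<^sub>R axis i 1)) has_real_derivative fst p r) (at r)
                \<and> (fst p has_real_derivative snd p r) (at r)"
      using line_derivs[OF P] by blast
    then obtain p where p: "\<And>g r. g \<in> S \<Longrightarrow> ((\<lambda>r. Y g (x + r *\<^sub>R axis i 1)) has_real_derivative fst (p g) r) (at r)
                \<and> (fst (p g) has_real_derivative snd (p g) r) (at r)"
      by metis
    have "deriv (\<lambda>s. deriv (\<lambda>r. \<Sum>g\<in>S. c g * Y g (x + r *\<^sub>R axis i 1)) s) 0 = (\<Sum>g\<in>S. c g * snd (p g) 0)"
      by (rule deriv2_sum[OF S, where U=UNIV and fa="\<lambda>g. fst (p g)"]) (use p in auto)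
    moreover have "deriv (\<lambda>s. deriv (\<lambda>r. Y g (x + r *\<^sub>R axis i 1)) s) 0 = snd (p g) 0" if "g \<in> S" for g
      by (rule deriv2_one[where U=UNIV and fa="fst (p g)"]) (use p that in auto)
    ultimately show ?thesis by simp
  qed
  then show ?thesis
    unfolding lap_reduce by (simp add: sum_distrib_left sum.swap[of _ S UNIV])
qed

lemma euler:
  fixes Y :: "real^'n::finite \<Rightarrow> real"
  assumes P: "polynomial_function Y" and H: "\<And>c x. Y (c *\<^sub>R x) = c ^ m * Y x"
  shows "(\<Sum>i\<in>UNIV. \<xi> $ i * deriv (\<lambda>r. Y (\<xi> + r *\<^sub>R axis i 1)) 0) = real m * Y \<xi>"
proof -
  obtain D where D: "(Y has_derivative D) (at \<xi>)"
    using differentiable_at_polynomial_function[OF P] unfolding differentiable_def by blast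
  have lin: "linear D" using D has_derivative_linear by blast
  have dl: "((\<lambda>r. Y (\<xi> + r *\<^sub>R v)) has_real_derivative D v) (at 0)" for v
  proof -
    have "((\<lambda>r. \<xi> + r *\<^sub>R v) has_derivative (\<lambda>h. h *\<^sub>R v)) (at 0)"
      by (auto intro!: derivative_eq_intros)
    moreover have "(Y has_derivative D) (at ((\<lambda>r. \<xi> + r *\<^sub>R v) 0))" using D by simp
    ultimately have "(Y \<circ> (\<lambda>r. \<xi> + r *\<^sub>R v) has_derivative D \<circ> (\<lambda>h. h *\<^sub>R v)) (at 0)"
      by (rule diff_chain_at)
    moreover have "D \<circ> (\<lambda>h. h *\<^sub>R v) = (*) (D v)"
      using linear_scale[OF lin] by (auto simp: fun_eq_iff)
    ultimately show ?thesis by (simp add: has_field_derivative_def o_def)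
  qed
  have dd: "deriv (\<lambda>r. Y (\<xi> + r *\<^sub>R axis i 1)) 0 = D (axis i 1)" for i
    using dl by (rule DERIV_imp_deriv)
  have "(\<Sum>i\<in>UNIV. \<xi> $ i * D (axis i 1)) = D (\<Sum>i\<in>UNIV. \<xi> $ i *\<^sub>R axis i 1)"
    by (simp add: linear_sum[OF lin] linear_scale[OF lin])
  also have "(\<Sum>i\<in>UNIV. \<xi> $ i *\<^sub>R axis i 1) = \<xi>"
    using basis_expansion[of \<xi>] by (simp add: scalar_mult_eq_scaleR)
  finally have s: "(\<Sum>i\<in>UNIV. \<xi> $ i * D (axis i 1)) = D \<xi>" .
  have e: "(\<lambda>r. Y (\<xi> + r *\<^sub>R \<xi>)) = (\<lambda>r. (1 + r) ^ m * Y \<xi>)"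
  proof
    fix r
    have "\<xi> + r *\<^sub>R \<xi> = (1 + r) *\<^sub>R \<xi>" by (simp add: scaleR_add_left)
    then show "Y (\<xi> + r *\<^sub>R \<xi>) = (1 + r) ^ m * Y \<xi>" using H by simp
  qed
  have "((\<lambda>r. (1 + r) ^ m * Y \<xi>) has_real_derivative real m * Y \<xi>) (at 0)"
    by (auto intro!: derivative_eq_intros)
  moreover have "((\<lambda>r. (1 + r) ^ m * Y \<xi>) has_real_derivative D \<xi>) (at 0)"
    using dl[of \<xi>] unfolding e .
  ultimately have "D \<xi> = real m * Y \<xi>" using DERIV_unique by blast
  then show ?thesis using s dd by simp
qed

lemma LB_line:
  fixes Y :: "real^'n::finite \<Rightarrow> real"
  assumes Y: "Y \<in> harm m" and xi: "norm \<xi> = 1"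
  shows "\<exists>\<psi>1 v. (\<forall>r\<in>ball 0 (1/2). ((\<lambda>r. Y ((\<xi> + r *\<^sub>R axis i 1) /\<^sub>R norm (\<xi> + r *\<^sub>R axis i 1)))
                  has_real_derivative \<psi>1 r) (at r))
           \<and> (\<psi>1 has_real_derivative v) (at 0)
           \<and> v = (real m * (real m + 2) * (\<xi> $ i)\<^sup>2 - real m) * Y \<xi>
                 - 2 * real m * (\<xi> $ i) * deriv (\<lambda>r. Y (\<xi> + r *\<^sub>R axis i 1)) 0
                 + deriv (\<lambda>s. deriv (\<lambda>r. Y (\<xi> + r *\<^sub>R axis i 1)) s) 0"
proof -
  define e where "e = (axis i 1 :: real^'n)"
  define x where "x = \<xi> $ i"
  have P: "polynomial_function Y" and H: "\<And>c x. Y (c *\<^sub>R x) = c ^ m * Y x"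
    using Y unfolding harm_def by auto
  obtain pq where pq: "\<And>r. ((\<lambda>r. Y (\<xi> + r *\<^sub>R e)) has_real_derivative fst pq r) (at r)
                \<and> (fst pq has_real_derivative snd pq r) (at r)"
    using line_derivs[OF P, of \<xi> e] by blast
  define Q1 where "Q1 = fst pq"
  define Q2 where "Q2 = snd pq"
  have dq: "((\<lambda>r. Y (\<xi> + r *\<^sub>R e)) has_real_derivative Q1 r) (at r)" for r using pq Q1_def by blast
  have dQ1: "(Q1 has_real_derivative Q2 r) (at r)" for r using pq Q1_def Q2_def by blast
  have Q10: "deriv (\<lambda>r. Y (\<xi> + r *\<^sub>R e)) 0 = Q1 0" using dq by (rule DERIV_imp_deriv)
  have Q20: "deriv (\<lambda>s. deriv (\<lambda>r. Y (\<xi> + r *\<^sub>R e)) s) 0 = Q2 0"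
    by (rule deriv2_one[where U=UNIV and fa=Q1]) (use dq dQ1 in auto)
  define \<rho> where "\<rho> = (\<lambda>r::real. 1 + 2 * r * x + r ^ 2)"
  have nrm: "norm (\<xi> + r *\<^sub>R e) ^ 2 = \<rho> r" for r
  proof -
    have "norm (\<xi> + r *\<^sub>R e) ^ 2 = inner (\<xi> + r *\<^sub>R e) (\<xi> + r *\<^sub>R e)" by (rule power2_norm_eq_inner)
    also have "\<dots> = inner \<xi> \<xi> + 2 * r * inner \<xi> e + r ^ 2 * inner e e"
      by (simp add: inner_add_left inner_add_right inner_commute[of e \<xi>] power2_eq_square algebra_simps)
    also have "inner \<xi> \<xi> = 1" using xi by (metis power2_norm_eq_inner power_one)
    also have "inner e e = 1" unfolding e_def by (metis norm_axis_1 power2_norm_eq_inner power_one)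
    also have "inner \<xi> e = x" unfolding e_def x_def by (simp add: inner_axis)
    finally show ?thesis unfolding \<rho>_def by simp
  qed
  have npos: "norm (\<xi> + r *\<^sub>R e) > 0" if "r \<in> ball 0 (1/2)" for r
  proof -
    have "norm \<xi> - norm (r *\<^sub>R e) \<le> norm (\<xi> + r *\<^sub>R e)" by (rule norm_diff_ineq)
    moreover have "norm (r *\<^sub>R e) = \<bar>r\<bar>" unfolding e_def by simp
    moreover have "\<bar>r\<bar> < 1/2" using that by simp
    ultimately show ?thesis using xi by linarith
  qed
  have rpos: "\<rho> r > 0" if "r \<in> ball 0 (1/2)" for r
    using npos[OF that] nrm[of r] by (metis zero_less_power)
  define p where "p = - (real m / 2)"
  define \<phi> where "\<phi> = (\<lambda>r. \<rho> r powr p)"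
  define \<phi>1 where "\<phi>1 = (\<lambda>r. p * \<rho> r powr (p - 1) * (2 * x + 2 * r))"
  have d\<rho>: "(\<rho> has_real_derivative (2 * x + 2 * r)) (at r)" for r
    unfolding \<rho>_def by (auto intro!: derivative_eq_intros)
  have d\<phi>: "(\<phi> has_real_derivative \<phi>1 r) (at r)" if "\<rho> r > 0" for r
    using DERIV_fun_powr[OF d\<rho> that, of p] unfolding \<phi>_def \<phi>1_def by simp
  have \<rho>0: "\<rho> 0 = 1" unfolding \<rho>_def by simp
  have psi_eq: "Y ((\<xi> + r *\<^sub>R e) /\<^sub>R norm (\<xi> + r *\<^sub>R e)) = \<phi> r * Y (\<xi> + r *\<^sub>R e)"
    if "r \<in> ball 0 (1/2)" for r
  proof -
    define N where "N = norm (\<xi> + r *\<^sub>R e)"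
    have N: "N > 0" using npos[OF that] N_def by simp
    have "Y ((\<xi> + r *\<^sub>R e) /\<^sub>R N) = inverse N ^ m * Y (\<xi> + r *\<^sub>R e)" by (rule H)
    moreover have "\<phi> r = inverse N ^ m"
    proof -
      have "\<phi> r = (N ^ 2) powr p" unfolding \<phi>_def N_def nrm ..
      also have "\<dots> = (N powr 2) powr p" using N by (simp add: powr_numeral)
      also have "\<dots> = N powr (2 * p)" by (simp add: powr_powr)
      also have "2 * p = - real m" unfolding p_def by simp
      also have "N powr (- real m) = inverse (N powr real m)" by (rule powr_minus)
      also have "\<dots> = inverse N ^ m" using N by (simp add: powr_realpow power_inverse)
      finally show ?thesis .
    qed
    ultimately show ?thesis unfolding N_def by simp
  qed
  define \<psi>1 where "\<psi>1 = (\<lambda>r. \<phi>1 r * Y (\<xi> + r *\<^sub>R e) + \<phi> r * Q1 r)"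
  have d\<psi>: "((\<lambda>r. Y ((\<xi> + r *\<^sub>R e) /\<^sub>R norm (\<xi> + r *\<^sub>R e))) has_real_derivative \<psi>1 r) (at r)"
    if "r \<in> ball 0 (1/2)" for r
  proof -
    have "((\<lambda>r. \<phi> r * Y (\<xi> + r *\<^sub>R e)) has_real_derivative \<psi>1 r) (at r)"
      unfolding \<psi>1_def using DERIV_mult[OF d\<phi>[OF rpos[OF that]] dq[of r]] by (simp add: algebra_simps)
    then show ?thesis
      by (rule has_field_derivative_transform_within_open[where S="ball 0 (1/2)"]) (use that psi_eq in auto)
  qed
  define \<phi>2 where "\<phi>2 = p * ((p - 1) * (2 * x) * (2 * x) + 2)"
  have d\<phi>1: "(\<phi>1 has_real_derivative \<phi>2) (at 0)"
  proof -
    have pw: "((\<lambda>r. \<rho> r powr (p - 1)) has_real_derivative (p - 1) * \<rho> 0 powr (p - 1 - 1) * (2 * x + 2 * 0)) (at 0)"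
      using DERIV_fun_powr[OF d\<rho>, of 0 "p - 1"] \<rho>0 by simp
    have "(\<phi>1 has_real_derivative p * ((p - 1) * \<rho> 0 powr (p - 1 - 1) * (2 * x + 2 * 0)) * (2 * x + 2 * 0)
                + 2 * (p * \<rho> 0 powr (p - 1))) (at 0)"
    proof -
      have d2: "((\<lambda>r. 2 * x + 2 * r) has_real_derivative 2) (at 0)"
        by (auto intro!: derivative_eq_intros)
      show ?thesis unfolding \<phi>1_def using DERIV_mult[OF DERIV_cmult[OF pw, of p] d2] by simp
    qed
    then show ?thesis unfolding \<phi>2_def \<rho>0 by (simp add: algebra_simps)
  qed
  have d\<psi>1: "(\<psi>1 has_real_derivative \<phi>2 * Y \<xi> + \<phi>1 0 * Q1 0 + (\<phi>1 0 * Q1 0 + \<phi> 0 * Q2 0)) (at 0)"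
  proof -
    have "(\<psi>1 has_real_derivative (\<phi>2 * Y (\<xi> + 0 *\<^sub>R e) + Q1 0 * \<phi>1 0) + (\<phi>1 0 * Q1 0 + Q2 0 * \<phi> 0)) (at 0)"
      unfolding \<psi>1_def
      by (rule DERIV_add[OF DERIV_mult[OF d\<phi>1 dq] DERIV_mult[OF d\<phi>[of 0] dQ1]]) (simp add: \<rho>0)
    then show ?thesis by (simp add: algebra_simps)
  qed
  have v: "\<phi>2 * Y \<xi> + \<phi>1 0 * Q1 0 + (\<phi>1 0 * Q1 0 + \<phi> 0 * Q2 0)
     = (real m * (real m + 2) * x\<^sup>2 - real m) * Y \<xi> - 2 * real m * x * Q1 0 + Q2 0"
    by (simp add: \<phi>2_def \<phi>1_def \<phi>_def \<rho>0 p_def algebra_simps power2_eq_square)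
  show ?thesis
    apply (rule exI[of _ \<psi>1])
    apply (rule exI[of _ "\<phi>2 * Y \<xi> + \<phi>1 0 * Q1 0 + (\<phi>1 0 * Q1 0 + \<phi> 0 * Q2 0)"])
    unfolding e_def[symmetric] x_def[symmetric] Q10 Q20
    using d\<psi> d\<psi>1 v by blast
qed

lemma sum_helper:
  fixes A B C y :: real and f g h :: "'n::finite \<Rightarrow> real"
  shows "(\<Sum>i\<in>UNIV. (A * (f i)\<^sup>2 - B) * y - C * f i * g i + h i)
     = A * y * (\<Sum>i\<in>UNIV. (f i)\<^sup>2) - B * y * real CARD('n) - C * (\<Sum>i\<in>UNIV. f i * g i) + (\<Sum>i\<in>UNIV. h i)"
proof -
  have "(\<Sum>i\<in>UNIV. (A * (f i)\<^sup>2 - B) * y - C * f i * g i + h i)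
     = (\<Sum>i\<in>UNIV. (A * y) * (f i)\<^sup>2) - (\<Sum>i\<in>(UNIV::'n set). B * y) - (\<Sum>i\<in>UNIV. C * (f i * g i)) + (\<Sum>i\<in>UNIV. h i)"
    by (simp add: sum.distrib sum_subtractf algebra_simps)
  also have "\<dots> = A * y * (\<Sum>i\<in>UNIV. (f i)\<^sup>2) - B * y * real CARD('n) - C * (\<Sum>i\<in>UNIV. f i * g i) + (\<Sum>i\<in>UNIV. h i)"
    by (simp add: sum_distrib_left[symmetric])
  finally show ?thesis .
qed

lemma LB_single_sum:
  fixes Y :: "real^'n::finite \<Rightarrow> real"
  assumes Y: "Y \<in> harm m" and xi: "norm \<xi> = 1"
  shows "(\<Sum>i\<in>UNIV. (real m * (real m + 2) * (\<xi> $ i)\<^sup>2 - real m) * Y \<xi>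
                 - 2 * real m * (\<xi> $ i) * deriv (\<lambda>r. Y (\<xi> + r *\<^sub>R axis i 1)) 0
                 + deriv (\<lambda>s. deriv (\<lambda>r. Y (\<xi> + r *\<^sub>R axis i 1)) s) 0)
         = - (real m * (real m + real CARD('n) - 2)) * Y \<xi>"
proof -
  have P: "polynomial_function Y" and H: "\<And>c x. Y (c *\<^sub>R x) = c ^ m * Y x"
    and L: "\<And>x. laplacian Y x = 0"
    using Y unfolding harm_def by auto
  have s1: "(\<Sum>i\<in>UNIV. (\<xi> $ i)\<^sup>2) = 1"
  proof -
    have "(\<Sum>i\<in>UNIV. (\<xi> $ i)\<^sup>2) = inner \<xi> \<xi>" by (simp add: inner_vec_def power2_eq_square)
    also have "\<dots> = 1" using xi by (metis power2_norm_eq_inner power_one)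
    finally show ?thesis .
  qed
  have s2: "(\<Sum>i\<in>UNIV. \<xi> $ i * deriv (\<lambda>r. Y (\<xi> + r *\<^sub>R axis i 1)) 0) = real m * Y \<xi>"
    by (rule euler[OF P H])
  have s3: "(\<Sum>i\<in>UNIV. deriv (\<lambda>s. deriv (\<lambda>r. Y (\<xi> + r *\<^sub>R axis i 1)) s) 0) = 0"
    using L[of \<xi>] unfolding lap_reduce .
  have "(\<Sum>i\<in>UNIV. (real m * (real m + 2) * (\<xi> $ i)\<^sup>2 - real m) * Y \<xi>
                 - 2 * real m * (\<xi> $ i) * deriv (\<lambda>r. Y (\<xi> + r *\<^sub>R axis i 1)) 0
                 + deriv (\<lambda>s. deriv (\<lambda>r. Y (\<xi> + r *\<^sub>R axis i 1)) s) 0)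
       = real m * (real m + 2) * Y \<xi> * (\<Sum>i\<in>UNIV. (\<xi> $ i)\<^sup>2) - real m * Y \<xi> * real CARD('n)
         - 2 * real m * (\<Sum>i\<in>UNIV. \<xi> $ i * deriv (\<lambda>r. Y (\<xi> + r *\<^sub>R axis i 1)) 0)
         + (\<Sum>i\<in>UNIV. deriv (\<lambda>s. deriv (\<lambda>r. Y (\<xi> + r *\<^sub>R axis i 1)) s) 0)"
    by (rule sum_helper)
  also have "\<dots> = - (real m * (real m + real CARD('n) - 2)) * Y \<xi>"
    unfolding s1 s2 s3 by (simp add: algebra_simps)
  finally show ?thesis .
qed

lemma LB_sum:
  fixes Y :: "'g \<Rightarrow> real^'n::finite \<Rightarrow> real"
  assumes S: "finite S" and Y: "\<And>g. g \<in> S \<Longrightarrow> Y g \<in> harm (mm g)" and xi: "norm \<xi> = 1"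
  shows "laplacian (\<lambda>x. \<Sum>g\<in>S. w g * Y g (x /\<^sub>R norm x)) \<xi>
       = (\<Sum>g\<in>S. w g * (- (real (mm g) * (real (mm g) + real CARD('n) - 2)) * Y g \<xi>))"
proof -
  define V where "V = (\<lambda>g i. (real (mm g) * (real (mm g) + 2) * (\<xi> $ i)\<^sup>2 - real (mm g)) * Y g \<xi>
                 - 2 * real (mm g) * (\<xi> $ i) * deriv (\<lambda>r. Y g (\<xi> + r *\<^sub>R axis i 1)) 0
                 + deriv (\<lambda>s. deriv (\<lambda>r. Y g (\<xi> + r *\<^sub>R axis i 1)) s) 0)"
  have row: "deriv (\<lambda>s. deriv (\<lambda>r. \<Sum>g\<in>S. w g * Y g ((\<xi> + r *\<^sub>R axis i 1) /\<^sub>R norm (\<xi> + r *\<^sub>R axis i 1))) s) 0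
         = (\<Sum>g\<in>S. w g * V g i)" for i
  proof -
    have "\<forall>g\<in>S. \<exists>p. (\<forall>r\<in>ball 0 (1/2). ((\<lambda>r. Y g ((\<xi> + r *\<^sub>R axis i 1) /\<^sub>R norm (\<xi> + r *\<^sub>R axis i 1)))
                  has_real_derivative fst p r) (at r)) \<and> (fst p has_real_derivative snd p) (at 0)
           \<and> snd p = V g i"
    proof
      fix g assume "g \<in> S"
      from LB_line[OF Y[OF this] xi, of i] obtain \<psi>1 v where
        "(\<forall>r\<in>ball 0 (1/2). ((\<lambda>r. Y g ((\<xi> + r *\<^sub>R axis i 1) /\<^sub>R norm (\<xi> + r *\<^sub>R axis i 1)))
                  has_real_derivative \<psi>1 r) (at r))" "(\<psi>1 has_real_derivative v) (at 0)" "v = V g i"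
        unfolding V_def by blast
      then show "\<exists>p. (\<forall>r\<in>ball 0 (1/2). ((\<lambda>r. Y g ((\<xi> + r *\<^sub>R axis i 1) /\<^sub>R norm (\<xi> + r *\<^sub>R axis i 1)))
                  has_real_derivative fst p r) (at r)) \<and> (fst p has_real_derivative snd p) (at 0)
           \<and> snd p = V g i"
        by (intro exI[of _ "(\<psi>1, v)"]) simp
    qed
    from bchoice[OF this] obtain p where p: "\<forall>g\<in>S. (\<forall>r\<in>ball 0 (1/2). ((\<lambda>r. Y g ((\<xi> + r *\<^sub>R axis i 1) /\<^sub>R norm (\<xi> + r *\<^sub>R axis i 1)))
                  has_real_derivative fst (p g) r) (at r)) \<and> (fst (p g) has_real_derivative snd (p g)) (at 0)
           \<and> snd (p g) = V g i"
      by blast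
    have "deriv (\<lambda>s. deriv (\<lambda>r. \<Sum>g\<in>S. w g * Y g ((\<xi> + r *\<^sub>R axis i 1) /\<^sub>R norm (\<xi> + r *\<^sub>R axis i 1))) s) 0
         = (\<Sum>g\<in>S. w g * snd (p g))"
      by (rule deriv2_sum[OF S, where U="ball 0 (1/2)" and fa="\<lambda>g. fst (p g)" and fb="\<lambda>g. snd (p g)"]) (use p in auto)
    also have "\<dots> = (\<Sum>g\<in>S. w g * V g i)" using p by simp
    finally show ?thesis .
  qed
  have "laplacian (\<lambda>x. \<Sum>g\<in>S. w g * Y g (x /\<^sub>R norm x)) \<xi> = (\<Sum>i\<in>UNIV. \<Sum>g\<in>S. w g * V g i)"
    unfolding lap_reduce using row by simp
  also have "\<dots> = (\<Sum>g\<in>S. w g * (\<Sum>i\<in>UNIV. V g i))"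
    by (simp add: sum.swap[of _ UNIV S] sum_distrib_left)
  also have "\<dots> = (\<Sum>g\<in>S. w g * (- (real (mm g) * (real (mm g) + real CARD('n) - 2)) * Y g \<xi>))"
    by (rule sum.cong) (auto simp: V_def LB_single_sum[OF Y xi])
  finally show ?thesis .
qed

lemma harmD:
  assumes "Y \<in> harm m"
  shows "polynomial_function Y" "\<And>c x. Y (c *\<^sub>R x) = c ^ m * Y x" "\<And>x. laplacian Y x = 0"
  using assms unfolding harm_def by auto

lemma LB_Z:
  fixes YY :: "'g \<Rightarrow> real^'n::finite \<Rightarrow> real"
  assumes S: "finite S" and Y: "\<And>g. g \<in> S \<Longrightarrow> YY g \<in> harm (mm g)" and xi: "norm \<xi> = 1"
  shows "laplace_beltrami (\<lambda>x. \<Sum>g\<in>S. c g * (jf g * YY g (t *\<^sub>R x))) \<xi>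
       = (\<Sum>g\<in>S. (c g * jf g * t ^ mm g) * (- (real (mm g) * (real (mm g) + real CARD('n) - 2)) * YY g \<xi>))"
proof -
  have "(\<lambda>x. (\<lambda>x. \<Sum>g\<in>S. c g * (jf g * YY g (t *\<^sub>R x))) (x /\<^sub>R norm x))
      = (\<lambda>x. \<Sum>g\<in>S. (c g * jf g * t ^ mm g) * YY g (x /\<^sub>R norm x))"
  proof
    fix x
    show "(\<lambda>x. \<Sum>g\<in>S. c g * (jf g * YY g (t *\<^sub>R x))) (x /\<^sub>R norm x)
       = (\<Sum>g\<in>S. (c g * jf g * t ^ mm g) * YY g (x /\<^sub>R norm x))"
      by (rule sum.cong) (auto simp: harmD(2)[OF Y] simp del: scaleR_scaleR)
  qed
  then show ?thesis unfolding laplace_beltrami_def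
    using LB_sum[OF S Y xi] by simp
qed

lemma dcone_gen:
  fixes YY :: "'g \<Rightarrow> real^'n::finite \<Rightarrow> real" and Z :: "real \<Rightarrow> real^'n \<Rightarrow> real"
  assumes S: "finite S" and Y: "\<And>g. g \<in> S \<Longrightarrow> YY g \<in> harm (mm g)"
    and mn: "\<And>g. g \<in> S \<Longrightarrow> mm g \<le> n"
    and Z: "Z = (\<lambda>t \<xi>. \<Sum>g\<in>S. c g * (jacobiJ (n - mm g) (real (2 * mm g) + real CARD('n) - 2) (1 - 2 * t) * YY g (t *\<^sub>R \<xi>)))"
    and t: "0 < t" "t \<le> 1" and xi: "norm \<xi> = 1"
  shows "Dcone (-1) Z t \<xi> = - (real n * (real n + real CARD('n) - 2)) * Z t \<xi>"
proof -
  define d where "d = real CARD('n)"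
  define R where "R = (\<lambda>g. Rp (n - mm g) (real (2 * mm g) + d - 2))"
  define J where "J = (\<lambda>g t. jacobiJ (n - mm g) (real (2 * mm g) + real CARD('n) - 2) (1 - 2 * t))"
  have LB: "laplace_beltrami (Z t) \<xi>
     = (\<Sum>g\<in>S. (c g * J g t * t ^ mm g) * (- (real (mm g) * (real (mm g) + d - 2)) * YY g \<xi>))"
    unfolding Z J_def d_def using LB_Z[OF S Y xi, where c=c and jf="\<lambda>g. J g t" and t=t] unfolding J_def by simp
  have Zt: "Z r \<xi> = (\<Sum>g\<in>S. c g * (J g r * r ^ mm g * YY g \<xi>))" for r
    unfolding Z J_def by (rule sum.cong) (auto simp: harmD(2)[OF Y])
  have Jp: "J g r = poly (R g) r" if "r \<le> 1" for g r
    unfolding J_def R_def d_def using J_eq[OF that] by simp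
  show ?thesis
  proof (cases "t = 1")
    case True
    have "laplace_beltrami (Z t) \<xi> = - (real n * (real n + d - 2)) * Z t \<xi>"
      unfolding LB Zt sum_distrib_left
    proof (rule sum.cong)
      fix g assume g: "g \<in> S"
      show "c g * J g t * t ^ mm g * (- (real (mm g) * (real (mm g) + d - 2)) * YY g \<xi>)
          = - (real n * (real n + d - 2)) * (c g * (J g t * t ^ mm g * YY g \<xi>))"
      proof (cases "n - mm g = 0")
        case True
        then have "mm g = n" using mn[OF g] by simp
        then show ?thesis by (simp add: algebra_simps)
      next
        case False
        then have "J g t = 0" using Jp[of t g] Rp_one[of "n - mm g"] True unfolding R_def by simp
        then show ?thesis by simp
      qed
    qed simp
    then show ?thesis unfolding Dcone_def True d_def by simp
  next
    case False
    then have t1: "t < 1" using t by simp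
    define f where "f = (\<lambda>g. tF (R g) (mm g) (YY g \<xi>))"
    have eqU: "Z r \<xi> = (\<Sum>g\<in>S. c g * f g r)" if "r < 1" for r
      unfolding Zt f_def tF_def using Jp that by (auto intro!: sum.cong)
    have ev: "eventually (\<lambda>r. Z r \<xi> = (\<Sum>g\<in>S. c g * f g r)) (nhds s)" if "s < 1" for s
    proof -
      have "eventually (\<lambda>r. r \<in> {..<1}) (nhds s)" using that by (intro eventually_nhds_in_open) auto
      then show ?thesis by eventually_elim (use eqU in auto)
    qed
    have d1: "deriv (\<lambda>r. Z r \<xi>) s = deriv (\<lambda>r. \<Sum>g\<in>S. c g * f g r) s" if "s < 1" for s
      by (rule deriv_cong_ev[OF ev[OF that] refl])
    have D1: "deriv (\<lambda>r. \<Sum>g\<in>S. c g * f g r) s = (\<Sum>g\<in>S. c g * tF1 (R g) (mm g) (YY g \<xi>) s)" for s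
      by (rule DERIV_imp_deriv) (auto intro!: DERIV_sum DERIV_cmult simp: f_def tF_deriv)
    have ev2: "eventually (\<lambda>s. deriv (\<lambda>r. Z r \<xi>) s = deriv (\<lambda>r. \<Sum>g\<in>S. c g * f g r) s) (nhds t)"
    proof -
      have "eventually (\<lambda>r. r \<in> {..<1}) (nhds t)" using t1 by (intro eventually_nhds_in_open) auto
      then show ?thesis by eventually_elim (use d1 in auto)
    qed
    have D2: "deriv (\<lambda>s. deriv (\<lambda>r. Z r \<xi>) s) t = (\<Sum>g\<in>S. c g * tF2 (R g) (mm g) (YY g \<xi>) t)"
    proof -
      have "deriv (\<lambda>s. deriv (\<lambda>r. Z r \<xi>) s) t = deriv (\<lambda>s. deriv (\<lambda>r. \<Sum>g\<in>S. c g * f g r) s) t"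
        by (rule deriv_cong_ev[OF ev2 refl])
      also have "\<dots> = (\<Sum>g\<in>S. c g * tF2 (R g) (mm g) (YY g \<xi>) t)"
        by (rule deriv2_sum[OF S, where U=UNIV and fa="\<lambda>g. tF1 (R g) (mm g) (YY g \<xi>)"])
           (auto simp: f_def tF_deriv tF1_deriv)
      finally show ?thesis .
    qed
    have Z0: "Z t \<xi> = (\<Sum>g\<in>S. c g * f g t)" using eqU t1 by simp
    have LB2: "laplace_beltrami (Z t) \<xi> = (\<Sum>g\<in>S. c g * (- (real (mm g) * (real (mm g) + d - 2)) * f g t))"
      unfolding LB using Jp t1 by (auto intro!: sum.cong simp: f_def tF_def algebra_simps)
    have "Dcone (-1) Z t \<xi> = (\<Sum>g\<in>S. c g * (t * (1 - t) * tF2 (R g) (mm g) (YY g \<xi>) t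
       + (d - 1 - (d + -1) * t) * tF1 (R g) (mm g) (YY g \<xi>) t
       + (- (real (mm g) * (real (mm g) + d - 2)) * tF (R g) (mm g) (YY g \<xi>) t) / t))"
    proof -
      define A where "A = (\<lambda>g. c g * tF2 (R g) (mm g) (YY g \<xi>) t)"
      define B where "B = (\<lambda>g. c g * tF1 (R g) (mm g) (YY g \<xi>) t)"
      define C where "C = (\<lambda>g. c g * (- (real (mm g) * (real (mm g) + d - 2)) * tF (R g) (mm g) (YY g \<xi>) t))"
      have "(\<Sum>g\<in>S. c g * (t * (1 - t) * tF2 (R g) (mm g) (YY g \<xi>) t
       + (d - 1 - (d + -1) * t) * tF1 (R g) (mm g) (YY g \<xi>) t
       + (- (real (mm g) * (real (mm g) + d - 2)) * tF (R g) (mm g) (YY g \<xi>) t) / t))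
        = (\<Sum>g\<in>S. t * (1 - t) * A g + (d - 1 - (d + -1) * t) * B g + C g / t)"
        by (rule sum.cong) (simp_all add: A_def B_def C_def algebra_simps)
      also have "\<dots> = t * (1 - t) * (\<Sum>g\<in>S. A g) + (d - 1 - (d + -1) * t) * (\<Sum>g\<in>S. B g) + (\<Sum>g\<in>S. C g) / t"
        by (simp add: sum.distrib sum_distrib_left sum_divide_distrib)
      finally have e: "(\<Sum>g\<in>S. c g * (t * (1 - t) * tF2 (R g) (mm g) (YY g \<xi>) t
       + (d - 1 - (d + -1) * t) * tF1 (R g) (mm g) (YY g \<xi>) t
       + (- (real (mm g) * (real (mm g) + d - 2)) * tF (R g) (mm g) (YY g \<xi>) t) / t))
        = t * (1 - t) * (\<Sum>g\<in>S. A g) + (d - 1 - (d + -1) * t) * (\<Sum>g\<in>S. B g) + (\<Sum>g\<in>S. C g) / t" .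
      have LB3: "laplace_beltrami (Z t) \<xi> = (\<Sum>g\<in>S. C g)"
        unfolding LB2 C_def f_def by (simp add: mult.assoc)
      show ?thesis unfolding e Dcone_def D2 d1[OF t1] D1 LB3 d_def[symmetric] A_def B_def by simp
    qed
    also have "\<dots> = (\<Sum>g\<in>S. c g * (- (real n * (real n + d - 2)) * tF (R g) (mm g) (YY g \<xi>) t))"
    proof (rule sum.cong)
      fix g assume g: "g \<in> S"
      show "c g * (t * (1 - t) * tF2 (R g) (mm g) (YY g \<xi>) t
       + (d - 1 - (d + -1) * t) * tF1 (R g) (mm g) (YY g \<xi>) t
       + (- (real (mm g) * (real (mm g) + d - 2)) * tF (R g) (mm g) (YY g \<xi>) t) / t)
        = c g * (- (real n * (real n + d - 2)) * tF (R g) (mm g) (YY g \<xi>) t)"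
        unfolding R_def time_ode[OF t(1) mn[OF g], where d=d and c="YY g \<xi>"] ..
    qed simp
    also have "\<dots> = - (real n * (real n + d - 2)) * Z t \<xi>"
      unfolding Z0 f_def sum_distrib_left by (rule sum.cong) (simp_all add: algebra_simps)
    finally show ?thesis unfolding d_def .
  qed
qed

lemma fspan_zero: "(\<lambda>t \<xi>. 0) \<in> fspan G"
  unfolding fspan_def by (rule CollectI, rule exI[of _ "{}"]) auto

lemma fspan_gen: "g \<in> G \<Longrightarrow> g \<in> fspan G"
  unfolding fspan_def by (rule CollectI, rule exI[of _ "{g}"], rule exI[of _ "\<lambda>_. 1"]) auto

lemma fspan_smult: "F \<in> fspan G \<Longrightarrow> (\<lambda>t \<xi>. a * F t \<xi>) \<in> fspan G"
proof -
  assume "F \<in> fspan G"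
  then obtain S c where S: "finite S" "S \<subseteq> G" "F = (\<lambda>t \<xi>. \<Sum>g\<in>S. c g * g t \<xi>)"
    unfolding fspan_def by blast
  show ?thesis unfolding fspan_def
    by (rule CollectI, rule exI[of _ S], rule exI[of _ "\<lambda>g. a * c g"])
       (use S in \<open>auto simp: sum_distrib_left mult.assoc\<close>)
qed

lemma fspan_add: "F1 \<in> fspan G \<Longrightarrow> F2 \<in> fspan G \<Longrightarrow> (\<lambda>t \<xi>. F1 t \<xi> + F2 t \<xi>) \<in> fspan G"
proof -
  assume "F1 \<in> fspan G" "F2 \<in> fspan G"
  then obtain S1 c1 S2 c2 where S1: "finite S1" "S1 \<subseteq> G" "F1 = (\<lambda>t \<xi>. \<Sum>g\<in>S1. c1 g * g t \<xi>)"
    and S2: "finite S2" "S2 \<subseteq> G" "F2 = (\<lambda>t \<xi>. \<Sum>g\<in>S2. c2 g * g t \<xi>)"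
    unfolding fspan_def by blast
  define c where "c = (\<lambda>g. (if g \<in> S1 then c1 g else 0) + (if g \<in> S2 then c2 g else 0))"
  have e1: "(\<Sum>g\<in>S1 \<union> S2. (if g \<in> S1 then c1 g else 0) * g t \<xi>) = (\<Sum>g\<in>S1. c1 g * g t \<xi>)" for t \<xi>
    by (rule sum.mono_neutral_cong_right) (use S1 S2 in auto)
  have e2: "(\<Sum>g\<in>S1 \<union> S2. (if g \<in> S2 then c2 g else 0) * g t \<xi>) = (\<Sum>g\<in>S2. c2 g * g t \<xi>)" for t \<xi>
    by (rule sum.mono_neutral_cong_right) (use S1 S2 in auto)
  have "(\<lambda>t \<xi>. F1 t \<xi> + F2 t \<xi>) = (\<lambda>t \<xi>. \<Sum>g\<in>S1 \<union> S2. c g * g t \<xi>)"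
    unfolding S1(3) S2(3) c_def distrib_right sum.distrib e1 e2 ..
  then show ?thesis unfolding fspan_def using S1 S2 by blast
qed

lemma fspan_sum:
  assumes "finite I" "\<And>i. i \<in> I \<Longrightarrow> F i \<in> fspan G"
  shows "(\<lambda>t \<xi>. \<Sum>i\<in>I. w i * F i t \<xi>) \<in> fspan G"
  using assms
proof (induction I rule: finite_induct)
  case empty
  then show ?case using fspan_zero by simp
next
  case (insert x I)
  have "(\<lambda>t \<xi>. w x * F x t \<xi> + (\<Sum>i\<in>I. w i * F i t \<xi>)) \<in> fspan G"
    using fspan_add[OF fspan_smult[of "F x" G "w x"]] insert by auto
  then show ?case using insert by simp
qed

lemma rep_fspan:
  fixes gen :: "nat \<Rightarrow> ('b \<Rightarrow> real) \<Rightarrow> 'a \<Rightarrow> 'c \<Rightarrow> real"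
  assumes "Z \<in> fspan {gen m Y | m Y. m \<le> N \<and> Y \<in> H m}"
  shows "\<exists>(S :: ('a \<Rightarrow> 'c \<Rightarrow> real) set) c mm YY. finite S \<and> (\<forall>g\<in>S. mm g \<le> N \<and> YY g \<in> H (mm g))
          \<and> Z = (\<lambda>t \<xi>. \<Sum>g\<in>S. c g * gen (mm g) (YY g) t \<xi>)"
proof -
  obtain S c where S: "finite S" "S \<subseteq> {gen m Y | m Y. m \<le> N \<and> Y \<in> H m}" "Z = (\<lambda>t \<xi>. \<Sum>g\<in>S. c g * g t \<xi>)"
    using assms unfolding fspan_def by blast
  have "\<forall>g\<in>S. \<exists>p. g = gen (fst p) (snd p) \<and> fst p \<le> N \<and> snd p \<in> H (fst p)"
  proof
    fix g assume "g \<in> S"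
    then obtain m Y where "g = gen m Y" "m \<le> N" "Y \<in> H m" using S(2) by blast
    then show "\<exists>p. g = gen (fst p) (snd p) \<and> fst p \<le> N \<and> snd p \<in> H (fst p)"
      by (intro exI[of _ "(m, Y)"]) simp
  qed
  from bchoice[OF this] obtain p where p: "\<forall>g\<in>S. g = gen (fst (p g)) (snd (p g)) \<and> fst (p g) \<le> N \<and> snd (p g) \<in> H (fst (p g))"
    by blast
  have "Z = (\<lambda>t \<xi>. \<Sum>g\<in>S. c g * gen (fst (p g)) (snd (p g)) t \<xi>)"
    unfolding S(3)
  proof (intro ext sum.cong refl)
    fix t \<xi> g assume "g \<in> S"
    then have "g = gen (fst (p g)) (snd (p g))" using p by blast
    from fun_cong[OF fun_cong[OF this]] show "c g * g t \<xi> = c g * gen (fst (p g)) (snd (p g)) t \<xi>"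
      by (rule arg_cong)
  qed
  moreover have "\<forall>g\<in>S. fst (p g) \<le> N \<and> snd (p g) \<in> H (fst (p g))" using p by blast
  ultimately show ?thesis using S(1)
    apply (rule_tac x=S in exI)
    apply (rule_tac x=c in exI)
    apply (rule_tac x="\<lambda>g. fst (p g)" in exI)
    apply (rule_tac x="\<lambda>g. snd (p g)" in exI)
    by simp
qed

lemma jacobiA_pos: "0 \<le> a \<Longrightarrow> 0 < jacobiA k (a + 1) 0"
  unfolding jacobiA_def by (intro divide_pos_pos pochhammer_pos) auto

lemma Jcone:
  assumes "t \<le> 1" "m < n"
  shows "jacobiJ (n - m) a (1 - 2 * t)
       = (2 * jacobiA (n - m - 1) (a + 1) 0 / real (n - m)) * ((1 - t) * jacobiP (n - 1 - m) a 1 (1 - 2 * t))"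
proof -
  have "jacobiJ (n - m) a (1 - 2 * t) = poly (Rp (n - m) a) t" by (rule J_eq[OF assms(1)])
  also have "\<dots> = 2 * jacobiA (n - m - 1) (a + 1) 0 / real (n - m) * (1 - t) * jacobiP (n - m - 1) a 1 (1 - 2 * t)"
    by (rule Rp_poly) (use assms(2) in simp)
  also have "n - m - 1 = n - 1 - m" by simp
  finally show ?thesis by simp
qed

lemma part1:
  fixes Z :: "real \<Rightarrow> real^'n::finite \<Rightarrow> real"
  assumes Z: "Z \<in> Vsob n" and t: "0 < t" "t \<le> 1" and xi: "norm \<xi> = 1"
  shows "Dcone (-1) Z t \<xi> = - (real n * (real n + real CARD('n) - 2)) * Z t \<xi>"
proof -
  have "Z \<in> fspan {(\<lambda>m Y t \<xi>. jacobiJ (n - m) (real (2 * m) + real CARD('n) - 2) (1 - 2 * t) * Y (t *\<^sub>R \<xi>)) m Y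
       | m Y. m \<le> n \<and> Y \<in> harm m}"
    using Z unfolding Vsob_def by simp
  from rep_fspan[OF this] show ?thesis
  proof (elim exE conjE)
    fix S c mm YY
    assume S: "finite S" "\<forall>g\<in>S. mm g \<le> n \<and> YY g \<in> harm (mm g)"
      "Z = (\<lambda>t \<xi>. \<Sum>g\<in>S. c g * (jacobiJ (n - mm g) (real (2 * mm g) + real CARD('n) - 2) (1 - 2 * t) * YY g (t *\<^sub>R \<xi>)))"
    show ?thesis
      by (rule dcone_gen[OF S(1) _ _ S(3) t xi]) (use S(2) in auto)
  qed
qed

lemma harm_sum:
  fixes YY :: "'g \<Rightarrow> real^'n::finite \<Rightarrow> real"
  assumes S: "finite S" and Y: "\<And>g. g \<in> S \<Longrightarrow> YY g \<in> harm n"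
  shows "(\<lambda>x. \<Sum>g\<in>S. c g * YY g x) \<in> harm n"
  unfolding harm_def
proof (intro CollectI conjI allI)
  show "polynomial_function (\<lambda>x. \<Sum>g\<in>S. c g * YY g x)"
  proof (rule polynomial_function_sum[OF S])
    fix g assume "g \<in> S"
    from polynomial_function_cmul[OF harmD(1)[OF Y[OF this]], of "c g"]
    show "polynomial_function (\<lambda>x. c g * YY g x)" by simp
  qed
next
  fix a x
  show "(\<Sum>g\<in>S. c g * YY g (a *\<^sub>R x)) = a ^ n * (\<Sum>g\<in>S. c g * YY g x)"
    unfolding sum_distrib_left by (rule sum.cong) (auto simp: harmD(2)[OF Y])
next
  fix x
  show "laplacian (\<lambda>x. \<Sum>g\<in>S. c g * YY g x) x = 0"
    by (subst laplacian_sum[OF S]) (auto simp: harmD(1,3)[OF Y])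
qed

lemma fwd:
  fixes Z :: "real \<Rightarrow> real^'n::finite \<Rightarrow> real"
  assumes Z: "Z \<in> Vsob n"
  shows "\<exists>E \<in> {(\<lambda>t \<xi>. Y (t *\<^sub>R \<xi>) + W t \<xi>) | Y W.
                Y \<in> harm n \<and>
                W \<in> {\<lambda>t \<xi>. 0} \<union> {(\<lambda>t \<xi>. (1 - t) * G t \<xi>) | G. 0 < n \<and> G \<in> Vop (n - 1)}}.
            cone_restrict E = cone_restrict Z"
proof -
  have "Z \<in> fspan {(\<lambda>m Y t \<xi>. jacobiJ (n - m) (real (2 * m) + real CARD('n) - 2) (1 - 2 * t) * Y (t *\<^sub>R \<xi>)) m Y
       | m Y. m \<le> n \<and> Y \<in> harm m}"
    using Z unfolding Vsob_def by simp
  from rep_fspan[OF this] show ?thesis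
  proof (elim exE conjE)
    fix S c mm YY
    assume S: "finite S" "\<forall>g\<in>S. mm g \<le> n \<and> YY g \<in> harm (mm g)"
      "Z = (\<lambda>t \<xi>. \<Sum>g\<in>S. c g * (jacobiJ (n - mm g) (real (2 * mm g) + real CARD('n) - 2) (1 - 2 * t) * YY g (t *\<^sub>R \<xi>)))"
    define a where "a = (\<lambda>m::nat. real (2 * m) + real CARD('n) - 2)"
    define S1 where "S1 = {g\<in>S. mm g = n}"
    define S2 where "S2 = {g\<in>S. mm g \<noteq> n}"
    have fin: "finite S1" "finite S2" using S(1) unfolding S1_def S2_def by auto
    have SU: "S = S1 \<union> S2" "S1 \<inter> S2 = {}" unfolding S1_def S2_def by auto
    have lt: "mm g < n" if "g \<in> S2" for g using that S(2) unfolding S2_def by fastforce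
    define Yn where "Yn = (\<lambda>x. \<Sum>g\<in>S1. c g * YY g x)"
    have Yn: "Yn \<in> harm n" unfolding Yn_def
      by (rule harm_sum[OF fin(1)]) (use S(2) in \<open>auto simp: S1_def\<close>)
    define \<kappa> where "\<kappa> = (\<lambda>g. 2 * jacobiA (n - mm g - 1) (a (mm g) + 1) 0 / real (n - mm g))"
    define P where "P = (\<lambda>g t \<xi>. jacobiP (n - 1 - mm g) (a (mm g)) 1 (1 - 2 * t) * YY g (t *\<^sub>R \<xi>))"
    define G where "G = (\<lambda>t \<xi>. \<Sum>g\<in>S2. (c g * \<kappa> g) * P g t \<xi>)"
    have G: "G \<in> Vop (n - 1)"
      unfolding Vop_def G_def
    proof (rule fspan_sum[OF fin(2)])
      fix g assume g: "g \<in> S2"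
      show "P g \<in> fspan {(\<lambda>t \<xi>. jacobiP (n - 1 - m) (real (2 * m) + real CARD('n) - 2) 1 (1 - 2 * t) * Y (t *\<^sub>R \<xi>)) |m Y.
             m \<le> n - 1 \<and> Y \<in> harm m}"
        apply (rule fspan_gen)
        apply (rule CollectI)
        apply (rule exI[of _ "mm g"])
        apply (rule exI[of _ "YY g"])
        using lt[OF g] S(2) g unfolding S2_def P_def a_def by auto
    qed
    define W where "W = (if n = 0 then (\<lambda>t \<xi>. 0) else (\<lambda>t (\<xi>::real^'n). (1 - t) * G t \<xi>))"
    have W: "W \<in> {\<lambda>t \<xi>. 0} \<union> {(\<lambda>t \<xi>. (1 - t) * G t \<xi>) | G. 0 < n \<and> G \<in> Vop (n - 1)}"
      unfolding W_def using G by auto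
    have cone: "Z t \<xi> = Yn (t *\<^sub>R \<xi>) + W t \<xi>" if t: "t \<le> 1" for t \<xi>
    proof -
      have "Z t \<xi> = (\<Sum>g\<in>S1. c g * (jacobiJ (n - mm g) (a (mm g)) (1 - 2 * t) * YY g (t *\<^sub>R \<xi>)))
                  + (\<Sum>g\<in>S2. c g * (jacobiJ (n - mm g) (a (mm g)) (1 - 2 * t) * YY g (t *\<^sub>R \<xi>)))"
        unfolding S(3) a_def SU(1) by (rule sum.union_disjoint[OF fin SU(2)])
      also have "(\<Sum>g\<in>S1. c g * (jacobiJ (n - mm g) (a (mm g)) (1 - 2 * t) * YY g (t *\<^sub>R \<xi>))) = Yn (t *\<^sub>R \<xi>)"
        unfolding Yn_def by (rule sum.cong) (auto simp: S1_def jacobiJ_def)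
      also have "(\<Sum>g\<in>S2. c g * (jacobiJ (n - mm g) (a (mm g)) (1 - 2 * t) * YY g (t *\<^sub>R \<xi>))) = W t \<xi>"
      proof (cases "n = 0")
        case True
        then have "S2 = {}" using lt by auto
        then show ?thesis unfolding W_def using True by simp
      next
        case False
        have "(\<Sum>g\<in>S2. c g * (jacobiJ (n - mm g) (a (mm g)) (1 - 2 * t) * YY g (t *\<^sub>R \<xi>)))
            = (\<Sum>g\<in>S2. (1 - t) * ((c g * \<kappa> g) * P g t \<xi>))"
          by (rule sum.cong) (auto simp: Jcone[OF t lt] \<kappa>_def P_def)
        also have "\<dots> = W t \<xi>" unfolding W_def G_def using False by (simp add: sum_distrib_left)
        finally show ?thesis .
      qed
      finally show ?thesis .
    qed
    show ?thesis
    proof (rule bexI[of _ "\<lambda>t \<xi>. Yn (t *\<^sub>R \<xi>) + W t \<xi>"])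
      show "cone_restrict (\<lambda>t \<xi>. Yn (t *\<^sub>R \<xi>) + W t \<xi>) = cone_restrict Z"
        unfolding cone_restrict_def using cone by (auto simp: fun_eq_iff)
    next
      show "(\<lambda>t \<xi>. Yn (t *\<^sub>R \<xi>) + W t \<xi>) \<in> {(\<lambda>t \<xi>. Y (t *\<^sub>R \<xi>) + W t \<xi>) | Y W.
                Y \<in> harm n \<and>
                W \<in> {\<lambda>t \<xi>. 0} \<union> {(\<lambda>t \<xi>. (1 - t) * G t \<xi>) | G. 0 < n \<and> G \<in> Vop (n - 1)}}"
        apply (rule CollectI)
        apply (rule exI[of _ Yn])
        apply (rule exI[of _ W])
        using Yn W by simp
    qed
  qed
qed

lemma Zy_in:
  fixes Y :: "real^'n::finite \<Rightarrow> real"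
  assumes Y: "Y \<in> harm n"
  shows "(\<lambda>t \<xi>. Y (t *\<^sub>R \<xi>)) \<in> Vsob n"
proof -
  have "(\<lambda>t \<xi>. jacobiJ (n - n) (real (2 * n) + real CARD('n) - 2) (1 - 2 * t) * Y (t *\<^sub>R \<xi>)) \<in> Vsob n"
    unfolding Vsob_def
    apply (rule fspan_gen)
    apply (rule CollectI)
    apply (rule exI[of _ n])
    apply (rule exI[of _ Y])
    using Y by simp
  then show ?thesis by (simp add: jacobiJ_def)
qed

lemma bwd:
  fixes E :: "real \<Rightarrow> real^'n::finite \<Rightarrow> real"
  assumes d2: "CARD('n) \<ge> 2"
    and E: "E \<in> {(\<lambda>t \<xi>. Y (t *\<^sub>R \<xi>) + W t \<xi>) | Y W.
                Y \<in> harm n \<and>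
                W \<in> {\<lambda>t \<xi>. 0} \<union> {(\<lambda>t \<xi>. (1 - t) * G t \<xi>) | G. 0 < n \<and> G \<in> Vop (n - 1)}}"
  shows "\<exists>Z \<in> Vsob n. cone_restrict Z = cone_restrict E"
proof -
  from E show ?thesis
  proof (elim CollectE exE conjE)
  fix Y :: "real^'n \<Rightarrow> real" and W :: "real \<Rightarrow> real^'n \<Rightarrow> real"
  assume EYW: "E = (\<lambda>t \<xi>. Y (t *\<^sub>R \<xi>) + W t \<xi>)" and Y: "Y \<in> harm n"
    and W: "W \<in> {\<lambda>t \<xi>. 0} \<union> {(\<lambda>t \<xi>. (1 - t) * G t \<xi>) | G. 0 < n \<and> G \<in> Vop (n - 1)}"
  have Zy: "(\<lambda>t \<xi>. Y (t *\<^sub>R \<xi>)) \<in> Vsob n" by (rule Zy_in[OF Y])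
  show ?thesis
  proof (cases "W = (\<lambda>t \<xi>. 0)")
    case True
    then have "E = (\<lambda>t \<xi>. Y (t *\<^sub>R \<xi>))" unfolding EYW by simp
    then show ?thesis using Zy by blast
  next
    case False
    then obtain G :: "real \<Rightarrow> real^'n \<Rightarrow> real" where WG: "W = (\<lambda>t \<xi>. (1 - t) * G t \<xi>)" and n: "0 < n" and G: "G \<in> Vop (n - 1)"
      using W by blast
    have "G \<in> fspan {(\<lambda>m Y t \<xi>. jacobiP (n - 1 - m) (real (2 * m) + real CARD('n) - 2) 1 (1 - 2 * t) * Y (t *\<^sub>R \<xi>)) m Y
       | m Y. m \<le> n - 1 \<and> Y \<in> harm m}"
      using G unfolding Vop_def by simp
    from rep_fspan[OF this] show ?thesis
    proof (elim exE conjE)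
      fix S c mm YY
      assume S: "finite S" "\<forall>g\<in>S. mm g \<le> n - 1 \<and> YY g \<in> harm (mm g)"
        "G = (\<lambda>t \<xi>. \<Sum>g\<in>S. c g * (jacobiP (n - 1 - mm g) (real (2 * mm g) + real CARD('n) - 2) 1 (1 - 2 * t) * YY g (t *\<^sub>R \<xi>)))"
      define a where "a = (\<lambda>m::nat. real (2 * m) + real CARD('n) - 2)"
      have lt: "mm g < n" if "g \<in> S" for g using that S(2) n by fastforce
      define \<kappa> where "\<kappa> = (\<lambda>g. 2 * jacobiA (n - mm g - 1) (a (mm g) + 1) 0 / real (n - mm g))"
      have kpos: "\<kappa> g \<noteq> 0" if "g \<in> S" for g
      proof -
        have "0 \<le> a (mm g)" unfolding a_def using d2 by simp
        then have "0 < jacobiA (n - mm g - 1) (a (mm g) + 1) 0" by (rule jacobiA_pos)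
        moreover have "0 < real (n - mm g)" using lt[OF that] by simp
        ultimately show ?thesis unfolding \<kappa>_def by simp
      qed
      define Jg where "Jg = (\<lambda>g t \<xi>. jacobiJ (n - mm g) (a (mm g)) (1 - 2 * t) * YY g (t *\<^sub>R \<xi>))"
      define Zw where "Zw = (\<lambda>t \<xi>. \<Sum>g\<in>S. (c g / \<kappa> g) * Jg g t \<xi>)"
      have Zw: "Zw \<in> Vsob n"
        unfolding Zw_def Vsob_def
      proof (rule fspan_sum[OF S(1)])
        fix g assume g: "g \<in> S"
        show "Jg g \<in> fspan {(\<lambda>t \<xi>. jacobiJ (n - m) (real (2 * m) + real CARD('n) - 2) (1 - 2 * t) * Y (t *\<^sub>R \<xi>)) |m Y.
             m \<le> n \<and> Y \<in> harm m}"
          apply (rule fspan_gen)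
          apply (rule CollectI)
          apply (rule exI[of _ "mm g"])
          apply (rule exI[of _ "YY g"])
          using lt[OF g] S(2) g unfolding Jg_def a_def by auto
      qed
      have Zin: "(\<lambda>t \<xi>. Y (t *\<^sub>R \<xi>) + Zw t \<xi>) \<in> Vsob n" by (rule fspan_add[OF Zy[unfolded Vsob_def] Zw[unfolded Vsob_def], folded Vsob_def])
      have cone: "Zw t \<xi> = (1 - t) * G t \<xi>" if t: "t \<le> 1" for t \<xi>
      proof -
        have "Zw t \<xi> = (\<Sum>g\<in>S. (1 - t) * (c g * (jacobiP (n - 1 - mm g) (real (2 * mm g) + real CARD('n) - 2) 1 (1 - 2 * t) * YY g (t *\<^sub>R \<xi>))))"
          unfolding Zw_def
        proof (rule sum.cong[OF refl])
          fix g assume g: "g \<in> S"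
          show "c g / \<kappa> g * Jg g t \<xi> = (1 - t) * (c g * (jacobiP (n - 1 - mm g) (real (2 * mm g) + real CARD('n) - 2) 1 (1 - 2 * t) * YY g (t *\<^sub>R \<xi>)))"
            unfolding Jg_def Jcone[OF t lt[OF g]] using kpos[OF g] unfolding \<kappa>_def a_def
            by (simp add: field_simps)
        qed
        also have "\<dots> = (1 - t) * G t \<xi>" unfolding S(3) by (simp add: sum_distrib_left)
        finally show ?thesis .
      qed
      show ?thesis
        apply (rule bexI[OF _ Zin])
        unfolding EYW WG cone_restrict_def using cone by (auto simp: fun_eq_iff)
    qed
  qed
qed
qed

theorem mainTheorem9:
  fixes n :: nat
  assumes d2: "CARD('n::finite) \<ge> 2"
  shows "(\<forall>Z \<in> (Vsob n :: (real \<Rightarrow> real^'n \<Rightarrow> real) set).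
            \<forall>t \<xi>. 0 < t \<and> t \<le> 1 \<and> norm \<xi> = 1 \<longrightarrow>
              Dcone (-1) Z t \<xi> = - (real n * (real n + real CARD('n) - 2)) * Z t \<xi>)
       \<and> cone_restrict ` (Vsob n :: (real \<Rightarrow> real^'n \<Rightarrow> real) set)
           = cone_restrict ` {(\<lambda>t \<xi>. Y (t *\<^sub>R \<xi>) + W t \<xi>) | Y W.
                Y \<in> harm n \<and>
                W \<in> {\<lambda>t \<xi>. 0} \<union> {(\<lambda>t \<xi>. (1 - t) * G t \<xi>) | G. 0 < n \<and> G \<in> Vop (n - 1)}}
       \<and> (\<forall>Y \<in> (harm n :: (real^'n \<Rightarrow> real) set). \<forall>G \<in> (Vop (n - 1) :: (real \<Rightarrow> real^'n \<Rightarrow> real) set).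
            0 < n \<and> cone_restrict (\<lambda>t \<xi>. Y (t *\<^sub>R \<xi>)) = cone_restrict (\<lambda>t \<xi>. (1 - t) * G t \<xi>)
            \<longrightarrow> cone_restrict (\<lambda>t \<xi>. Y (t *\<^sub>R \<xi>)) = cone_restrict (\<lambda>t \<xi>. 0))"
proof (intro conjI)
  show "\<forall>Z \<in> (Vsob n :: (real \<Rightarrow> real^'n \<Rightarrow> real) set).
            \<forall>t \<xi>. 0 < t \<and> t \<le> 1 \<and> norm \<xi> = 1 \<longrightarrow>
              Dcone (-1) Z t \<xi> = - (real n * (real n + real CARD('n) - 2)) * Z t \<xi>"
    using part1 by blast
next
  let ?RS = "{(\<lambda>t \<xi>. Y (t *\<^sub>R \<xi>) + W t \<xi>) | Y W.
                Y \<in> harm n \<and>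
                W \<in> {\<lambda>t \<xi>. 0} \<union> {(\<lambda>t \<xi>. (1 - t) * G t \<xi>) | G. 0 < n \<and> G \<in> Vop (n - 1)}} :: (real \<Rightarrow> real^'n \<Rightarrow> real) set"
  show "cone_restrict ` (Vsob n :: (real \<Rightarrow> real^'n \<Rightarrow> real) set) = cone_restrict ` ?RS"
  proof (rule subset_antisym)
    show "cone_restrict ` (Vsob n :: (real \<Rightarrow> real^'n \<Rightarrow> real) set) \<subseteq> cone_restrict ` ?RS"
    proof (rule image_subsetI)
      fix Z :: "real \<Rightarrow> real^'n \<Rightarrow> real"
      assume "Z \<in> Vsob n"
      from fwd[OF this] obtain E where E: "E \<in> ?RS" "cone_restrict E = cone_restrict Z"
        by (elim bexE)
      show "cone_restrict Z \<in> cone_restrict ` ?RS"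
        using image_eqI[where f=cone_restrict, OF E(2)[symmetric] E(1)] .
    qed
  next
    show "cone_restrict ` ?RS \<subseteq> cone_restrict ` (Vsob n :: (real \<Rightarrow> real^'n \<Rightarrow> real) set)"
    proof (rule image_subsetI)
      fix E :: "real \<Rightarrow> real^'n \<Rightarrow> real"
      assume "E \<in> ?RS"
      from bwd[OF d2 this] obtain Z where Z: "Z \<in> Vsob n" "cone_restrict Z = cone_restrict E"
        by (elim bexE)
      show "cone_restrict E \<in> cone_restrict ` Vsob n"
        using image_eqI[where f=cone_restrict, OF Z(2)[symmetric] Z(1)] .
    qed
  qed
next
  show "\<forall>Y \<in> (harm n :: (real^'n \<Rightarrow> real) set). \<forall>G \<in> (Vop (n - 1) :: (real \<Rightarrow> real^'n \<Rightarrow> real) set).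
            0 < n \<and> cone_restrict (\<lambda>t \<xi>. Y (t *\<^sub>R \<xi>)) = cone_restrict (\<lambda>t \<xi>. (1 - t) * G t \<xi>)
            \<longrightarrow> cone_restrict (\<lambda>t \<xi>. Y (t *\<^sub>R \<xi>)) = cone_restrict (\<lambda>t \<xi>. 0)"
  proof (intro ballI impI)
    fix Y :: "real^'n \<Rightarrow> real" and G :: "real \<Rightarrow> real^'n \<Rightarrow> real"
    assume Y: "Y \<in> harm n"
      and h: "0 < n \<and> cone_restrict (\<lambda>t \<xi>. Y (t *\<^sub>R \<xi>)) = cone_restrict (\<lambda>t \<xi>. (1 - t) * G t \<xi>)"
    have Y1: "Y \<xi> = 0" if "norm \<xi> = 1" for \<xi>
    proof -
      have "cone_restrict (\<lambda>t \<xi>. Y (t *\<^sub>R \<xi>)) 1 \<xi> = cone_restrict (\<lambda>t \<xi>. (1 - t) * G t \<xi>) 1 \<xi>"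
        using h by simp
      then show ?thesis using that unfolding cone_restrict_def by simp
    qed
    show "cone_restrict (\<lambda>t \<xi>. Y (t *\<^sub>R \<xi>)) = cone_restrict (\<lambda>t \<xi>. 0)"
      unfolding cone_restrict_def using Y1 by (auto simp: fun_eq_iff harmD(2)[OF Y])
  qed
qed

end
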